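(* For all integers $n,m\ge 2$, the number $a(n,m,\Gamma_{gs})$ of group-separable $(n,m)$-elections on the candidate set $\{c_1,\ldots,c_m\}$ satisfies $a(n,m,\Gamma_{gs})\le m!\cdot(3+2\sqrt 2)^{m(n-1)}$.
   Context: An $(n,m)$-election $(C,\mathcal{P})$ is a set $C$ of $m$ candidates with an ordered $n$-tuple $\mathcal{P}=(V_1,\ldots,V_n)$ of total orders (votes) on $C$. The election is group-separable if for every subset $C'\subseteq C$ with $|C'|\ge 2$ there exists a partition of $C'$ into two nonempty sets $C_1,C_2$ such that in every vote either all candidates of $C_1$ are ranked above all candidates of $C_2$, or all candidates of $C_2$ are ranked above all candidates of $C_1$. *)

theory Defs
  imports Complex_Main
begin

(* A vote (total order on a finite candidate set C) is represented as a ranking list: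
   a list v with distinct v and set v = C; earlier position = ranked higher. *)
definition is_vote :: "'a set \<Rightarrow> 'a list \<Rightarrow> bool" where
  "is_vote C v \<longleftrightarrow> distinct v \<and> set v = C"

definition ranks_above :: "'a list \<Rightarrow> 'a \<Rightarrow> 'a \<Rightarrow> bool" where
  "ranks_above v a b \<longleftrightarrow> (\<exists>i j. i < j \<and> j < length v \<and> v ! i = a \<and> v ! j = b)"

definition is_election :: "'a set \<Rightarrow> nat \<Rightarrow> 'a list list \<Rightarrow> bool" where
  "is_election C n P \<longleftrightarrow> length P = n \<and> (\<forall>v\<in>set P. is_vote C v)"

definition group_separable :: "'a set \<Rightarrow> 'a list list \<Rightarrow> bool" where
  "group_separable C P \<longleftrightarrow>
     (\<forall>C'. C' \<subseteq> C \<and> card C' \<ge> 2 \<longrightarrow>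
        (\<exists>C1 C2. C1 \<noteq> {} \<and> C2 \<noteq> {} \<and> C1 \<inter> C2 = {} \<and> C1 \<union> C2 = C' \<and>
           (\<forall>v\<in>set P. (\<forall>a\<in>C1. \<forall>b\<in>C2. ranks_above v a b) \<or>
                        (\<forall>a\<in>C1. \<forall>b\<in>C2. ranks_above v b a))))"

definition num_gs_elections :: "nat \<Rightarrow> nat \<Rightarrow> nat" where
  "num_gs_elections n m =
     card {P. is_election {1..m} n P \<and> group_separable {1..m} P}"

end

theory Submission
  imports Defs "HOL-Combinatorics.Multiset_Permutations"
begin


lemma ra_rev: "ranks_above (rev v) a b \<longleftrightarrow> ranks_above v b a"
proof
  assume "ranks_above (rev v) a b"
  then obtain i j where "i<j" "j<length v" "rev v ! i = a" "rev v ! j = b" by (auto simp: ranks_above_def)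
  then show "ranks_above v b a" unfolding ranks_above_def
    by (intro exI[of _ "length v - 1 - j"] exI[of _ "length v - 1 - i"]) (auto simp: rev_nth)
next
  assume "ranks_above v b a"
  then obtain i j where "i<j" "j<length v" "v ! i = b" "v ! j = a" by (auto simp: ranks_above_def)
  then show "ranks_above (rev v) a b" unfolding ranks_above_def
    by (intro exI[of _ "length v - 1 - j"] exI[of _ "length v - 1 - i"]) (auto simp: rev_nth)
qed

lemma ra_app1:
  assumes "distinct (xs @ ys)" "a \<in> set xs" "b \<in> set xs"
  shows "ranks_above (xs @ ys) a b \<longleftrightarrow> ranks_above xs a b"
proof
  assume "ranks_above (xs @ ys) a b"
  then obtain i j where ij: "i<j" "j<length (xs@ys)" "(xs@ys) ! i = a" "(xs@ys) ! j = b" by (auto simp: ranks_above_def)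
  obtain j' where j': "j' < length xs" "xs ! j' = b" using assms(3) by (auto simp: in_set_conv_nth)
  have "(xs@ys) ! j' = b" using j' by (simp add: nth_append)
  have j'l: "j' < length (xs@ys)" using j' by simp
  have "j = j'" using nth_eq_iff_index_eq[OF assms(1) ij(2) j'l] ij(4) \<open>(xs@ys) ! j' = b\<close> by simp
  then show "ranks_above xs a b" using ij j' unfolding ranks_above_def
    by (intro exI[of _ i] exI[of _ j]) (auto simp: nth_append)
next
  assume "ranks_above xs a b"
  then obtain i j where ij: "i<j" "j<length xs" "xs ! i = a" "xs ! j = b" by (auto simp: ranks_above_def)
  then show "ranks_above (xs @ ys) a b" unfolding ranks_above_def
    by (intro exI[of _ i] exI[of _ j]) (auto simp: nth_append)
qed

lemma ra_app2:
  assumes "distinct (xs @ ys)" "a \<in> set ys" "b \<in> set ys"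
  shows "ranks_above (xs @ ys) a b \<longleftrightarrow> ranks_above ys a b"
proof -
  have "ranks_above (xs @ ys) a b \<longleftrightarrow> ranks_above (rev ys @ rev xs) b a"
    using ra_rev[of "xs@ys" b a] by simp
  also have "\<dots> \<longleftrightarrow> ranks_above (rev ys) b a"
    using assms by (intro ra_app1) auto
  also have "\<dots> \<longleftrightarrow> ranks_above ys a b" by (simp add: ra_rev)
  finally show ?thesis .
qed

lemma ra_antisym:
  assumes "distinct v" "ranks_above v a b" shows "\<not> ranks_above v b a"
proof
  assume "ranks_above v b a"
  then obtain i j where ij: "i<j" "j<length v" "v ! i = b" "v ! j = a" by (auto simp: ranks_above_def)
  obtain i' j' where ij': "i'<j'" "j'<length v" "v ! i' = a" "v ! j' = b" using assms(2) by (auto simp: ranks_above_def)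
  have "i = j'" "j = i'" using ij ij' assms(1) by (auto simp: nth_eq_iff_index_eq)
  then show False using ij ij' by simp
qed

lemma ra_cons: assumes "a \<in> set ys" shows "ranks_above (xs @ b # ys) b a"
proof -
  obtain j where "j < length ys" "ys ! j = a" using assms by (auto simp: in_set_conv_nth)
  then show ?thesis unfolding ranks_above_def
    by (intro exI[of _ "length xs"] exI[of _ "length xs + 1 + j"]) (auto simp: nth_append)
qed

lemma prefix_block:
  assumes "distinct v" "set v = D1 \<union> D2" "D1 \<inter> D2 = {}"
    "\<forall>a\<in>D1. \<forall>b\<in>D2. ranks_above v a b"
  shows "set (take (card D1) v) = D1"
proof -
  let ?P = "\<lambda>x. x \<in> D1"
  have s: "set (takeWhile ?P v) = D1"
  proof
    show "set (takeWhile ?P v) \<subseteq> D1" by (auto dest: set_takeWhileD)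
    show "D1 \<subseteq> set (takeWhile ?P v)"
    proof
      fix a assume a: "a \<in> D1"
      show "a \<in> set (takeWhile ?P v)"
      proof (rule ccontr)
        assume na: "a \<notin> set (takeWhile ?P v)"
        have av: "a \<in> set v" using a assms(2) by auto
        have sv: "a \<in> set (takeWhile ?P v @ dropWhile ?P v)" using av by simp
        have "a \<in> set (dropWhile ?P v)" using na sv by (simp only: set_append Un_iff) blast
        then obtain b rest where dw: "dropWhile ?P v = b # rest"
          by (cases "dropWhile ?P v") auto
        have bn: "b \<notin> D1" using hd_dropWhile[of ?P v] dw by simp
        have "b \<in> set v" using set_dropWhileD[of b ?P v] dw by simp
        then have b2: "b \<in> D2" using bn assms(2) by auto
        have ab: "a \<noteq> b" using a bn by auto
        have ar: "a \<in> set rest" using \<open>a \<in> set (dropWhile ?P v)\<close> dw ab by auto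
        have veq: "v = takeWhile ?P v @ b # rest" using dw takeWhile_dropWhile_id[of ?P v] by simp
        have r1: "ranks_above v b a" by (subst veq) (rule ra_cons[OF ar])
        have r2: "ranks_above v a b" using assms(4) a b2 by auto
        show False using ra_antisym[OF assms(1) r2] r1 by simp
      qed
    qed
  qed
  have "distinct (takeWhile ?P v)" using assms(1) distinct_takeWhile by blast
  then have L: "length (takeWhile ?P v) = card D1" using s distinct_card by fastforce
  from takeWhile_eq_take[of ?P v] have "takeWhile ?P v = take (card D1) v" by (simp only: L)
  then show ?thesis using s by simp
qed




definition Sep :: "'a list \<Rightarrow> 'a list set" where
  "Sep u = {w. distinct w \<and> set w = set u \<and> group_separable (set u) [u, w]}"

definition Dec :: "'a list \<Rightarrow> 'a list set" where
  "Dec u = {w \<in> Sep u. \<exists>k. 0 < k \<and> k < length u \<and> set (take k w) = set (take k u)}"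

definition ND :: "'a list \<Rightarrow> 'a list set" where
  "ND u = Sep u - Dec u"

definition sepP :: "'a list \<Rightarrow> 'a set \<Rightarrow> 'a set \<Rightarrow> bool" where
  "sepP v C1 C2 \<longleftrightarrow> (\<forall>a\<in>C1. \<forall>b\<in>C2. ranks_above v a b) \<or> (\<forall>a\<in>C1. \<forall>b\<in>C2. ranks_above v b a)"

definition splitOK :: "'a set \<Rightarrow> 'a list \<Rightarrow> 'a list \<Rightarrow> 'a set \<Rightarrow> 'a set \<Rightarrow> bool" where
  "splitOK C' u w C1 C2 \<longleftrightarrow> C1 \<noteq> {} \<and> C2 \<noteq> {} \<and> C1 \<inter> C2 = {} \<and> C1 \<union> C2 = C' \<and> sepP u C1 C2 \<and> sepP w C1 C2"

lemma GS2_iff: "group_separable C [u,w] \<longleftrightarrow>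
   (\<forall>C'. C' \<subseteq> C \<and> 2 \<le> card C' \<longrightarrow> (\<exists>C1 C2. splitOK C' u w C1 C2))"
  by (simp add: group_separable_def sepP_def splitOK_def)

lemma GS2_get: "group_separable C [u,w] \<Longrightarrow> C' \<subseteq> C \<Longrightarrow> 2 \<le> card C' \<Longrightarrow> \<exists>C1 C2. splitOK C' u w C1 C2"
  by (simp add: GS2_iff)

lemma GS2_intro: "(\<And>C'. C' \<subseteq> C \<Longrightarrow> 2 \<le> card C' \<Longrightarrow> \<exists>C1 C2. splitOK C' u w C1 C2) \<Longrightarrow> group_separable C [u,w]"
  by (simp add: GS2_iff)

lemma sepP_rev: "sepP (rev w) C1 C2 = sepP w C1 C2"
  unfolding sepP_def ra_rev by (rule disj_commute)

lemma sepP_swap: "sepP w C2 C1 = sepP w C1 C2"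
  unfolding sepP_def by blast

lemma sepP_cong:
  assumes h: "\<forall>a\<in>S. \<forall>b\<in>S. ranks_above v' a b \<longleftrightarrow> ranks_above v a b" and s: "C1 \<subseteq> S" "C2 \<subseteq> S"
  shows "sepP v' C1 C2 = sepP v C1 C2"
proof -
  have e1: "(\<forall>a\<in>C1. \<forall>b\<in>C2. ranks_above v' a b) = (\<forall>a\<in>C1. \<forall>b\<in>C2. ranks_above v a b)"
    using h s by (auto simp: subset_iff)
  have e2: "(\<forall>a\<in>C1. \<forall>b\<in>C2. ranks_above v' b a) = (\<forall>a\<in>C1. \<forall>b\<in>C2. ranks_above v b a)"
    using h s by (auto simp: subset_iff)
  show ?thesis unfolding sepP_def e1 e2 ..
qed


lemma GS_restrict:
  assumes gs: "group_separable C [u, w]" and S: "S \<subseteq> C"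
    and ru: "\<forall>a\<in>S. \<forall>b\<in>S. ranks_above u' a b \<longleftrightarrow> ranks_above u a b"
    and rw: "\<forall>a\<in>S. \<forall>b\<in>S. ranks_above w' a b \<longleftrightarrow> ranks_above w a b"
  shows "group_separable S [u', w']"
proof (rule GS2_intro)
  fix C' assume C': "C' \<subseteq> S" "2 \<le> card C'"
  have "C' \<subseteq> C" using C'(1) S by (rule order_trans)
  from GS2_get[OF gs this C'(2)] obtain C1 C2 where c: "splitOK C' u w C1 C2" by blast
  have sub: "C1 \<subseteq> S" "C2 \<subseteq> S" using c C'(1) unfolding splitOK_def by auto
  have "splitOK C' u' w' C1 C2"
    using c sepP_cong[OF ru sub] sepP_cong[OF rw sub] unfolding splitOK_def by simp
  then show "\<exists>C1 C2. splitOK C' u' w' C1 C2" by blast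
qed

lemma GS_rev:
  assumes gs: "group_separable C [u, w]" shows "group_separable C [u, rev w]"
proof (rule GS2_intro)
  fix C' assume C': "C' \<subseteq> C" "2 \<le> card C'"
  from GS2_get[OF gs C'] obtain C1 C2 where c: "splitOK C' u w C1 C2" by blast
  then have "splitOK C' u (rev w) C1 C2" unfolding splitOK_def sepP_rev .
  then show "\<exists>C1 C2. splitOK C' u (rev w) C1 C2" by blast
qed

lemma Sep_perm: "Sep u \<subseteq> permutations_of_set (set u)"
  by (auto simp: Sep_def permutations_of_set_def)

lemma finite_Sep: "finite (Sep u)"
  using Sep_perm finite_subset finite_permutations_of_set by blast

lemma card_Sep_fact: "distinct u \<Longrightarrow> card (Sep u) \<le> fact (length u)"
  using card_mono[OF finite_permutations_of_set Sep_perm[of u]]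
  by (simp add: distinct_card)

lemma Sep_rev: "w \<in> Sep u \<Longrightarrow> rev w \<in> Sep u"
  unfolding Sep_def using GS_rev by auto

lemma Sep_split:
  assumes w: "w \<in> Sep u" and du: "distinct u" and k: "set (take k w) = set (take k u)"
  shows "take k w \<in> Sep (take k u)" "drop k w \<in> Sep (drop k u)"
proof -
  have dw: "distinct w" and sw: "set w = set u" and gs: "group_separable (set u) [u, w]"
    using w by (auto simp: Sep_def)
  have dtw: "distinct (take k w @ drop k w)" using dw by simp
  have dtu: "distinct (take k u @ drop k u)" using du by simp
  have sd: "set (drop k w) = set (drop k u)"
  proof -
    have a1: "set w = set (take k w) \<union> set (drop k w)" by (metis append_take_drop_id set_append)
    have a2: "set (take k w) \<inter> set (drop k w) = {}" using dtw by (simp only: distinct_append)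
    have b1: "set u = set (take k u) \<union> set (drop k u)" by (metis append_take_drop_id set_append)
    have b2: "set (take k u) \<inter> set (drop k u) = {}" using dtu by (simp only: distinct_append)
    show ?thesis using a1 a2 b1 b2 sw k by blast
  qed
  have "group_separable (set (take k u)) [take k u, take k w]"
  proof (rule GS_restrict[OF gs])
    show "set (take k u) \<subseteq> set u" by (rule set_take_subset)
    show "\<forall>a\<in>set (take k u). \<forall>b\<in>set (take k u). ranks_above (take k u) a b = ranks_above u a b"
      using ra_app1[OF dtu] by simp
    show "\<forall>a\<in>set (take k u). \<forall>b\<in>set (take k u). ranks_above (take k w) a b = ranks_above w a b"
      using ra_app1[OF dtw] k by simp
  qed
  then show "take k w \<in> Sep (take k u)" using dw k by (simp add: Sep_def)
  have "group_separable (set (drop k u)) [drop k u, drop k w]"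
  proof (rule GS_restrict[OF gs])
    show "set (drop k u) \<subseteq> set u" by (rule set_drop_subset)
    show "\<forall>a\<in>set (drop k u). \<forall>b\<in>set (drop k u). ranks_above (drop k u) a b = ranks_above u a b"
      using ra_app2[OF dtu] by simp
    show "\<forall>a\<in>set (drop k u). \<forall>b\<in>set (drop k u). ranks_above (drop k w) a b = ranks_above w a b"
      using ra_app2[OF dtw] sd by simp
  qed
  then show "drop k w \<in> Sep (drop k u)" using dw sd by (simp add: Sep_def)
qed


lemma ND_rev:
  assumes w: "w \<in> ND u" and du: "distinct u" and len: "length u \<ge> 2"
  shows "rev w \<in> Dec u"
proof -
  have ws: "w \<in> Sep u" and wn: "w \<notin> Dec u" using w by (auto simp: ND_def)
  have dw: "distinct w" and sw: "set w = set u" and gs: "group_separable (set u) [u, w]"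
    using ws by (auto simp: Sep_def)
  have "card (set u) \<ge> 2" using du len by (simp add: distinct_card)
  from GS2_get[OF gs order_refl this] obtain C1 C2 where c: "splitOK (set u) u w C1 C2" by blast
  obtain D1 D2 where d: "D1 \<noteq> {}" "D2 \<noteq> {}" "D1 \<inter> D2 = {}" "D1 \<union> D2 = set u"
    "\<forall>a\<in>D1. \<forall>b\<in>D2. ranks_above u a b" "sepP w D1 D2"
  proof (cases "\<forall>a\<in>C1. \<forall>b\<in>C2. ranks_above u a b")
    case True then show ?thesis using that[of C1 C2] c unfolding splitOK_def by blast
  next
    case False
    then have u2: "\<forall>a\<in>C2. \<forall>b\<in>C1. ranks_above u a b" using c unfolding splitOK_def sepP_def by blast
    have "sepP w C1 C2" using c unfolding splitOK_def by blast
    then have "sepP w C2 C1" by (subst sepP_swap)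
    moreover have "C2 \<inter> C1 = {}" "C2 \<union> C1 = set u" using c unfolding splitOK_def by auto
    ultimately show ?thesis using that[of C2 C1] c u2 unfolding splitOK_def by blast
  qed
  define k where "k = card D1"
  have fin: "finite D1" "finite D2" using d(4) by (metis finite_Un finite_set)+
  have ku: "set (take k u) = D1" unfolding k_def using prefix_block[OF du d(4)[symmetric] d(3) d(5)] .
  have k0: "0 < k" using d(1) fin by (simp add: k_def card_gt_0_iff)
  have "card (set u) = card D1 + card D2" using card_Un_disjoint[OF fin d(3)] d(4) by simp
  then have kl: "k < length u" using du d(2) fin by (simp add: k_def distinct_card card_gt_0_iff)
  show ?thesis
  proof (cases "\<forall>a\<in>D1. \<forall>b\<in>D2. ranks_above w a b")
    case True
    have "set (take k w) = D1" unfolding k_def using prefix_block[OF dw _ d(3) True] d(4) sw by simp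
    then have "w \<in> Dec u" using ws k0 kl ku by (auto simp: Dec_def)
    then show ?thesis using wn by simp
  next
    case False
    then have "\<forall>a\<in>D1. \<forall>b\<in>D2. ranks_above w b a" using d(6) unfolding sepP_def by blast
    then have "\<forall>a\<in>D1. \<forall>b\<in>D2. ranks_above (rev w) a b" by (simp add: ra_rev)
    then have "set (take k (rev w)) = D1" unfolding k_def using prefix_block[OF _ _ d(3)] d(4) sw dw by simp
    then show ?thesis using Sep_rev[OF ws] k0 kl ku by (auto simp: Dec_def)
  qed
qed

lemma finite_Dec: "finite (Dec u)"
  using finite_Sep[of u] by (rule finite_subset[rotated]) (auto simp: Dec_def)

lemma card_ND_le: "distinct u \<Longrightarrow> length u \<ge> 2 \<Longrightarrow> card (ND u) \<le> card (Dec u)"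
proof -
  assume a: "distinct u" "length u \<ge> 2"
  have "ND u \<subseteq> rev ` Dec u"
  proof
    fix w assume "w \<in> ND u"
    then have "rev w \<in> Dec u" using ND_rev a by blast
    then show "w \<in> rev ` Dec u" using image_eqI[of w rev "rev w"] by simp
  qed
  then have "card (ND u) \<le> card (rev ` Dec u)" by (intro card_mono finite_imageI finite_Dec)
  also have "\<dots> \<le> card (Dec u)" by (rule card_image_le[OF finite_Dec])
  finally show ?thesis .
qed

lemma card_Sep_le: "card (Sep u) \<le> card (Dec u) + card (ND u)"
proof -
  have "Sep u = Dec u \<union> ND u" by (auto simp: ND_def Dec_def)
  then show ?thesis using card_Un_le[of "Dec u" "ND u"] by simp
qed




function tau :: "nat \<Rightarrow> nat" where
  "tau m = (if m \<le> 1 then 1 else (\<Sum>k\<in>{1..<m}. tau k * (if m - k \<le> 1 then 1 else 2 * tau (m - k))))"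
  by auto
termination by (relation "measure id") auto

declare tau.simps[simp del]

definition sig :: "nat \<Rightarrow> nat" where
  "sig m = (if m \<le> 1 then 1 else 2 * tau m)"

lemma tau1: "tau 1 = 1" by (subst tau.simps) simp

lemma tau_rec: "m \<ge> 2 \<Longrightarrow> tau m = (\<Sum>k\<in>{1..<m}. tau k * sig (m - k))"
  by (subst tau.simps) (simp add: sig_def)

lemma Dec_sub:
  assumes du: "distinct u"
  shows "Dec u \<subseteq> (\<Union>k\<in>{1..<length u}. (\<lambda>(X,Y). X @ Y) ` (ND (take k u) \<times> Sep (drop k u)))"
proof
  fix w assume w: "w \<in> Dec u"
  let ?P = "\<lambda>k. 0 < k \<and> k < length u \<and> set (take k w) = set (take k u)"
  have ws: "w \<in> Sep u" and ex: "\<exists>k. ?P k" using w by (auto simp: Dec_def)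
  define k where "k = (LEAST k. ?P k)"
  have Pk: "?P k" unfolding k_def using LeastI_ex[OF ex] .
  have s1: "take k w \<in> Sep (take k u)" and s2: "drop k w \<in> Sep (drop k u)"
    using Sep_split[OF ws du] Pk by auto
  have nd: "take k w \<notin> Dec (take k u)"
  proof
    assume "take k w \<in> Dec (take k u)"
    then obtain k' where k': "0 < k'" "k' < length (take k u)" "set (take k' (take k w)) = set (take k' (take k u))"
      by (auto simp: Dec_def)
    have "k' < k" using k' Pk by simp
    moreover have "?P k'" using k' Pk by (simp add: min_def)
    ultimately show False using not_less_Least[of k' ?P] unfolding k_def by blast
  qed
  have "take k w \<in> ND (take k u)" using s1 nd by (simp add: ND_def)
  then have "(take k w, drop k w) \<in> ND (take k u) \<times> Sep (drop k u)" using s2 by simp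
  then have "w \<in> (\<lambda>(X,Y). X @ Y) ` (ND (take k u) \<times> Sep (drop k u))"
    by (rule rev_image_eqI) simp
  moreover have "k \<in> {1..<length u}" using Pk by auto
  ultimately show "w \<in> (\<Union>k\<in>{1..<length u}. (\<lambda>(X,Y). X @ Y) ` (ND (take k u) \<times> Sep (drop k u)))"
    by blast
qed

lemma finite_ND: "finite (ND u)"
  using finite_Sep[of u] by (rule finite_subset[rotated]) (auto simp: ND_def)

lemma comb:
  "distinct u \<Longrightarrow> length u = m \<Longrightarrow> m \<ge> 1 \<Longrightarrow> card (ND u) \<le> tau m \<and> card (Sep u) \<le> sig m"
proof (induction m arbitrary: u rule: less_induct)
  case (less m)
  show ?case
  proof (cases "m = 1")
    case True
    have "card (Sep u) \<le> 1" using card_Sep_fact[OF less.prems(1)] less.prems(2) True by simp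
    moreover have "card (ND u) \<le> card (Sep u)"
      by (rule card_mono[OF finite_Sep]) (auto simp: ND_def)
    ultimately show ?thesis using True tau1 by (simp add: sig_def)
  next
    case False
    then have m2: "m \<ge> 2" using less.prems(3) by simp
    have "card (Dec u) \<le> card (\<Union>k\<in>{1..<m}. (\<lambda>(X,Y). X @ Y) ` (ND (take k u) \<times> Sep (drop k u)))"
      using Dec_sub[OF less.prems(1)] less.prems(2)
      by (intro card_mono) (auto intro!: finite_imageI finite_cartesian_product finite_ND finite_Sep)
    also have "\<dots> \<le> (\<Sum>k\<in>{1..<m}. card ((\<lambda>(X,Y). X @ Y) ` (ND (take k u) \<times> Sep (drop k u))))"
      by (rule card_UN_le) simp
    also have "\<dots> \<le> (\<Sum>k\<in>{1..<m}. card (ND (take k u)) * card (Sep (drop k u)))"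
    proof (rule sum_mono)
      fix k assume "k \<in> {1..<m}"
      have "card ((\<lambda>(X,Y). X @ Y) ` (ND (take k u) \<times> Sep (drop k u))) \<le> card (ND (take k u) \<times> Sep (drop k u))"
        by (rule card_image_le) (auto intro: finite_cartesian_product finite_ND finite_Sep)
      then show "card ((\<lambda>(X,Y). X @ Y) ` (ND (take k u) \<times> Sep (drop k u))) \<le> card (ND (take k u)) * card (Sep (drop k u))"
        by (simp add: card_cartesian_product)
    qed
    also have "\<dots> \<le> (\<Sum>k\<in>{1..<m}. tau k * sig (m - k))"
    proof (rule sum_mono)
      fix k assume k: "k \<in> {1..<m}"
      have "card (ND (take k u)) \<le> tau k"
        using less.IH[of k "take k u"] k less.prems by auto
      moreover have "card (Sep (drop k u)) \<le> sig (m - k)"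
        using less.IH[of "m - k" "drop k u"] k less.prems by auto
      ultimately show "card (ND (take k u)) * card (Sep (drop k u)) \<le> tau k * sig (m - k)"
        by (rule mult_le_mono)
    qed
    also have "\<dots> = tau m" using tau_rec[OF m2] by simp
    finally have D: "card (Dec u) \<le> tau m" .
    have N: "card (ND u) \<le> tau m" using card_ND_le[OF less.prems(1)] less.prems(2) m2 D by simp
    have "card (Sep u) \<le> sig m" using card_Sep_le[of u] D N m2 by (simp add: sig_def)
    then show ?thesis using N by simp
  qed
qed




lemma tau1': "tau (Suc 0) = 1" using tau1 by simp

lemma dsum:
  fixes f g :: "nat \<Rightarrow> real"
  assumes f0: "\<And>k. f k \<ge> 0" and g0: "\<And>k. g k \<ge> 0"
  shows "(\<Sum>m\<in>{2..Suc N}. \<Sum>k\<in>{1..<m}. f k * g (m - k)) \<le> (\<Sum>k\<in>{1..N}. f k) * (\<Sum>j\<in>{1..N}. g j)"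
proof -
  let ?S = "SIGMA m:{2..Suc N}. {1..<m}"
  let ?h = "\<lambda>(m,k). (k, m - k)"
  have "(\<Sum>m\<in>{2..Suc N}. \<Sum>k\<in>{1..<m}. f k * g (m - k)) = (\<Sum>(m,k)\<in>?S. f k * g (m - k))"
    by (rule sum.Sigma) auto
  also have "\<dots> = (\<Sum>p\<in>?h ` ?S. f (fst p) * g (snd p))"
    by (subst sum.reindex) (auto simp: inj_on_def intro!: sum.cong)
  also have "\<dots> \<le> (\<Sum>p\<in>{1..N}\<times>{1..N}. f (fst p) * g (snd p))"
    by (rule sum_mono2) (auto intro: mult_nonneg_nonneg f0 g0)
  also have "\<dots> = (\<Sum>k\<in>{1..N}. f k) * (\<Sum>j\<in>{1..N}. g j)"
    by (simp add: sum_product sum.cartesian_product case_prod_beta)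
  finally show ?thesis .
qed

lemma aux_le: "(0::real) \<le> h \<Longrightarrow> a - b = 2 * h + e \<Longrightarrow> e = 0 \<Longrightarrow> b \<le> a"
  by linarith

definition xx :: real where "xx = 3 - 2 * sqrt 2"

lemma xx_facts: "xx > 0" "xx * (3 + 2 * sqrt 2) = 1" "xx^2 - 6*xx + 1 = 0" "xx < 1/5"
proof -
  have s2: "sqrt 2 * sqrt 2 = (2::real)" by simp
  have "sqrt 2 < (3/2::real)" by (rule real_less_lsqrt) (auto simp: power2_eq_square)
  moreover have "sqrt 2 > (7/5::real)" by (rule real_less_rsqrt) (auto simp: power2_eq_square)
  ultimately show "xx > 0" "xx < 1/5" unfolding xx_def by auto
  show "xx * (3 + 2 * sqrt 2) = 1" unfolding xx_def using s2 by (simp add: algebra_simps)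
  show "xx^2 - 6*xx + 1 = 0" unfolding xx_def using s2 by (simp add: algebra_simps power2_eq_square)
qed

lemma sig_sum: "N \<ge> 1 \<Longrightarrow> (\<Sum>j\<in>{1..N}. real (sig j) * xx^j) = 2 * (\<Sum>j\<in>{1..N}. real (tau j) * xx^j) - xx"
proof (induction N rule: dec_induct)
  case base then show ?case by (simp add: sig_def tau1')
next
  case (step n)
  have "sig (Suc n) = 2 * tau (Suc n)" using step(1) by (simp add: sig_def)
  then show ?case using step by (simp add: algebra_simps)
qed

lemma tau_partial: "(\<Sum>m\<in>{1..N}. real (tau m) * xx^m) \<le> (1 + xx) / 4"
proof (induction N)
  case 0 then show ?case using xx_facts by simp
next
  case (Suc N)
  let ?F = "\<lambda>N. (\<Sum>m\<in>{1..N}. real (tau m) * xx^m)"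
  show ?case
  proof (cases "N = 0")
    case True then show ?thesis using xx_facts by (simp add: tau1')
  next
    case False
    have F0: "?F N \<ge> 0" using xx_facts by (intro sum_nonneg) simp
    have split: "?F (Suc N) = xx + (\<Sum>m\<in>{2..Suc N}. real (tau m) * xx^m)"
    proof -
      have "{1..Suc N} = insert 1 {2..Suc N}" by auto
      then show ?thesis by (simp add: tau1')
    qed
    have "(\<Sum>m\<in>{2..Suc N}. real (tau m) * xx^m)
        = (\<Sum>m\<in>{2..Suc N}. \<Sum>k\<in>{1..<m}. (real (tau k) * xx^k) * (real (sig (m - k)) * xx^(m - k)))"
    proof (rule sum.cong)
      fix m assume m: "m \<in> {2..Suc N}"
      have "real (tau m) * xx^m = (\<Sum>k\<in>{1..<m}. real (tau k) * real (sig (m - k))) * xx^m"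
        using tau_rec[of m] m by simp
      also have "\<dots> = (\<Sum>k\<in>{1..<m}. (real (tau k) * xx^k) * (real (sig (m - k)) * xx^(m - k)))"
        unfolding sum_distrib_right
      proof (rule sum.cong)
        fix k assume "k \<in> {1..<m}"
        then have "xx^m = xx^k * xx^(m-k)" by (simp add: power_add[symmetric])
        then show "real (tau k) * real (sig (m - k)) * xx ^ m = real (tau k) * xx ^ k * (real (sig (m - k)) * xx ^ (m - k))"
          by simp
      qed simp
      finally show "real (tau m) * xx^m = (\<Sum>k\<in>{1..<m}. (real (tau k) * xx^k) * (real (sig (m - k)) * xx^(m - k)))" .
    qed simp
    also have "\<dots> \<le> ?F N * (\<Sum>j\<in>{1..N}. real (sig j) * xx^j)"
      by (rule dsum) (use xx_facts in simp_all)
    also have "\<dots> = ?F N * (2 * ?F N - xx)" using sig_sum[of N] False by simp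
    finally have "?F (Suc N) \<le> xx + ?F N * (2 * ?F N - xx)" using split by simp
    also have "\<dots> \<le> (1 + xx) / 4"
    proof -
      have h: "0 \<le> ((1 + xx)/4 - ?F N) * (?F N - (xx/2 - (1+xx)/4))"
      proof (rule mult_nonneg_nonneg)
        show "0 \<le> (1 + xx)/4 - ?F N" using Suc.IH by linarith
        have "xx < 1" using xx_facts(4) by simp
        then have "xx/2 - (1+xx)/4 < 0" by (simp add: field_simps)
        then show "0 \<le> ?F N - (xx/2 - (1+xx)/4)" using F0 by linarith
      qed
      have key: "(1+xx)/4 - (xx + ?F N * (2 * ?F N - xx)) = 2 * (((1 + xx)/4 - ?F N) * (?F N - (xx/2 - (1+xx)/4))) + (xx^2 - 6*xx + 1)/8"
        by (simp add: field_simps power2_eq_square)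
      have e0: "(xx^2 - 6*xx + 1)/8 = 0" using xx_facts(3) by simp
      show ?thesis by (rule aux_le[OF h key e0])
    qed
    finally show ?thesis .
  qed
qed

lemma sig_bound: "m \<ge> 1 \<Longrightarrow> real (sig m) \<le> (3 + 2 * sqrt 2) ^ m"
proof -
  assume m: "m \<ge> 1"
  have c: "(3 + 2 * sqrt 2) \<ge> (1::real)" by simp
  show ?thesis
  proof (cases "m = 1")
    case True then show ?thesis using c by (simp add: sig_def)
  next
    case False
    have "real (tau m) * xx^m \<le> (\<Sum>j\<in>{1..m}. real (tau j) * xx^j)"
      using m xx_facts by (intro member_le_sum) auto
    also have "\<dots> \<le> (1 + xx) / 4" by (rule tau_partial)
    finally have t: "real (tau m) * xx^m \<le> (1 + xx) / 4" .
    have s1: "real (sig m) * xx^m \<le> 1" using t False m xx_facts by (simp add: sig_def)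
    have "real (sig m) * xx^m * (3 + 2 * sqrt 2)^m \<le> (3 + 2 * sqrt 2)^m"
      using mult_right_mono[OF s1, of "(3 + 2 * sqrt 2)^m"] by simp
    moreover have "xx^m * (3 + 2 * sqrt 2)^m = 1" using xx_facts(2) by (simp add: power_mult_distrib[symmetric])
    ultimately show ?thesis by (simp add: mult.assoc)
  qed
qed




lemma gs_mono:
  assumes gs: "group_separable C P" and sub: "set Q \<subseteq> set P"
  shows "group_separable C Q"
  unfolding group_separable_def sepP_def[symmetric]
proof (intro allI impI)
  fix C' assume C': "C' \<subseteq> C \<and> 2 \<le> card C'"
  have "\<exists>C1 C2. C1 \<noteq> {} \<and> C2 \<noteq> {} \<and> C1 \<inter> C2 = {} \<and> C1 \<union> C2 = C' \<and> (\<forall>v\<in>set P. sepP v C1 C2)"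
    using gs C' unfolding group_separable_def sepP_def[symmetric] by blast
  then obtain C1 C2 where c: "C1 \<noteq> {} \<and> C2 \<noteq> {} \<and> C1 \<inter> C2 = {} \<and> C1 \<union> C2 = C'"
    and s: "\<forall>v\<in>set P. sepP v C1 C2" by blast
  have "\<forall>v\<in>set Q. sepP v C1 C2" using s sub by blast
  then show "\<exists>C1 C2. C1 \<noteq> {} \<and> C2 \<noteq> {} \<and> C1 \<inter> C2 = {} \<and> C1 \<union> C2 = C' \<and> (\<forall>v\<in>set Q. sepP v C1 C2)"
    using c by blast
qed

theorem mainTheorem6:
  fixes n m :: nat
  assumes "n \<ge> 2" and "m \<ge> 2"
  shows "real (num_gs_elections n m) \<le> fact m * (3 + 2 * sqrt 2) ^ (m * (n - 1))"
proof -
  let ?E = "{P. is_election {1..m} n P \<and> group_separable {1..m} P}"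
  let ?V = "permutations_of_set {1..m}"
  let ?L = "\<lambda>u. {L. set L \<subseteq> Sep u \<and> length L = n - 1}"
  let ?T = "\<lambda>u. (\<lambda>L. u # L) ` ?L u"
  have sub: "?E \<subseteq> (\<Union>u\<in>?V. ?T u)"
  proof
    fix P assume P: "P \<in> ?E"
    then have len: "length P = n" and votes: "\<forall>v\<in>set P. is_vote {1..m} v"
      and gs: "group_separable {1..m} P" by (auto simp: is_election_def)
    obtain u L where PL: "P = u # L" using len assms(1) by (cases P) auto
    have uV: "u \<in> ?V" using votes PL by (auto simp: is_vote_def permutations_of_set_def)
    have su: "set u = {1..m}" using votes PL by (auto simp: is_vote_def)
    have "set L \<subseteq> Sep u"
    proof
      fix v assume v: "v \<in> set L"
      have "is_vote {1..m} v" using votes PL v by auto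
      moreover have "group_separable {1..m} [u,v]" using gs_mono[OF gs] PL v by auto
      ultimately show "v \<in> Sep u" using su by (auto simp: Sep_def is_vote_def)
    qed
    moreover have "length L = n - 1" using len PL by simp
    ultimately have "P \<in> ?T u" using PL by blast
    then show "P \<in> (\<Union>u\<in>?V. ?T u)" using uV by blast
  qed
  have finL: "\<And>u. finite (?L u)" by (rule finite_lists_length_eq[OF finite_Sep])
  have "card ?E \<le> card (\<Union>u\<in>?V. ?T u)"
    by (rule card_mono[OF _ sub]) (intro finite_UN_I finite_permutations_of_set finite_imageI finL)
  also have "\<dots> \<le> (\<Sum>u\<in>?V. card (?T u))" by (rule card_UN_le) simp
  also have "\<dots> \<le> (\<Sum>u\<in>?V. sig m ^ (n - 1))"
  proof (rule sum_mono)
    fix u assume u: "u \<in> ?V"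
    then have du: "distinct u" and lu: "length u = m"
      using distinct_card[of u] by (auto simp: permutations_of_set_def)
    have "card (?T u) \<le> card (?L u)" by (rule card_image_le[OF finL])
    also have "\<dots> = card (Sep u) ^ (n - 1)" by (rule card_lists_length_eq[OF finite_Sep])
    also have "\<dots> \<le> sig m ^ (n - 1)"
      using comb[OF du lu] assms(2) by (intro power_mono) auto
    finally show "card (?T u) \<le> sig m ^ (n - 1)" .
  qed
  also have "\<dots> = fact m * sig m ^ (n - 1)" by simp
  finally have c: "num_gs_elections n m \<le> fact m * sig m ^ (n - 1)" by (simp add: num_gs_elections_def)
  have "real (num_gs_elections n m) \<le> fact m * real (sig m) ^ (n - 1)"
    using of_nat_mono[OF c] by simp
  also have "\<dots> \<le> fact m * ((3 + 2 * sqrt 2) ^ m) ^ (n - 1)"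
    using sig_bound[of m] assms(2) by (intro mult_left_mono power_mono) auto
  also have "\<dots> = fact m * (3 + 2 * sqrt 2) ^ (m * (n - 1))" by (simp add: power_mult)
  finally show ?thesis .
qed


end
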